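(* Fix $\alpha>0$. For $K\ge 1$ define $\mathcal{D}:[0,1]\times[-1,1]^K\to\mathbb{R}^K$ by \[ \mathcal{D}(t,c_{1},\dots,c_{K}):=\left(e^{-4\pi^{2}\alpha t}c_{1},\,e^{-4\pi^{2}\cdot 2^{2}\alpha t}c_{2},\,\dots,\,e^{-4\pi^{2}K^{2}\alpha t}c_{K}\right). \] Then for any $0<\epsilon<1$ and $K\ge1$ there exists an MLP network $\tilde{\mathcal{D}}:\mathbb{R}^{K+1}\to\mathbb{R}^K$, consisting of dense layers and $\tanh$ as activation function, with $O(K^{3}+K\log^{2}(\epsilon^{-1}))$ weights, such that \[ \|\tilde{\mathcal{D}}(t,c_{1},\dots,c_{K})-\mathcal{D}(t,c_{1},\dots,c_{K})\|_{\infty}\leq\epsilon \] for all inputs $c_{1},\dots,c_{K}\in[-1,1]$ and $t\in[0,1]$.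
   Context: An MLP (multilayer perceptron) network is a feed-forward composition of layers, each of the form $v_j=\sigma\circ(M_j v_{j-1}+b_j)$ with a matrix $M_j$ and bias vector $b_j$ and coordinate-wise nonlinearity $\sigma$ (here $\sigma=\tanh$); in some layers the bias and/or the nonlinearity may be omitted. The "number of weights" is the total number of parameters (entries of all $M_j$ and $b_j$). The operator $\mathcal{D}$ is the exact spectral time-stepping map for the heat equation $u_t=\alpha u_{xx}$ on $[0,1]$ in the basis $\{\sin(2\pi kx)\}_k$. *)

theory Defs
  imports Complex_Main
begin

text \<open>Vectors of dimension n are functions nat \<Rightarrow> real, only indices < n matter.\<close>

datatype layer = Layer
  (l_in: nat) (l_out: nat) (l_mat: "nat \<Rightarrow> nat \<Rightarrow> real")
  (l_bias: "(nat \<Rightarrow> real) option") (l_act: bool)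

definition eval_layer :: "layer \<Rightarrow> (nat \<Rightarrow> real) \<Rightarrow> (nat \<Rightarrow> real)" where
  "eval_layer L v = (\<lambda>i. if i < l_out L then
      (let z = (\<Sum>j<l_in L. l_mat L i j * v j)
             + (case l_bias L of None \<Rightarrow> 0 | Some b \<Rightarrow> b i)
       in if l_act L then tanh z else z)
    else 0)"

fun eval_mlp :: "layer list \<Rightarrow> (nat \<Rightarrow> real) \<Rightarrow> (nat \<Rightarrow> real)" where
  "eval_mlp [] v = v"
| "eval_mlp (L # Ls) v = eval_mlp Ls (eval_layer L v)"

fun mlp_dims_ok :: "layer list \<Rightarrow> nat \<Rightarrow> nat \<Rightarrow> bool" where
  "mlp_dims_ok [] n m = False"
| "mlp_dims_ok [L] n m = (l_in L = n \<and> l_out L = m)"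
| "mlp_dims_ok (L # L' # Ls) n m = (l_in L = n \<and> mlp_dims_ok (L' # Ls) (l_out L) m)"

definition layer_weights :: "layer \<Rightarrow> nat" where
  "layer_weights L = l_out L * l_in L + (if l_bias L = None then 0 else l_out L)"

definition num_weights :: "layer list \<Rightarrow> nat" where
  "num_weights Ls = (\<Sum>L\<leftarrow>Ls. layer_weights L)"

definition heat_step :: "real \<Rightarrow> real \<Rightarrow> (nat \<Rightarrow> real) \<Rightarrow> nat \<Rightarrow> real" where
  "heat_step \<alpha> t c k = exp (- 4 * pi^2 * (real k)^2 * \<alpha> * t) * c k"

definition mlp_input :: "nat \<Rightarrow> real \<Rightarrow> (nat \<Rightarrow> real) \<Rightarrow> nat \<Rightarrow> real" where
  "mlp_input K t c = (\<lambda>j. if j = 0 then t else if j \<le> K then c j else 0)"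

end

theory Submission
  imports Defs
begin

lemma tanh_alt: "tanh (y::real) = 1 - 2 / (1 + exp (2*y))"
proof -
  have p: "exp (2*y) > 0" by simp
  have e: "exp (-2*y) = 1 / exp (2*y)" by (simp add: exp_minus field_simps)
  have g: "(1 - 1/z)/(1 + 1/z) = 1 - 2/(1+z)" if "z > 0" for z::real
  proof -
    have "(1 - 1/z)/(1 + 1/z) = ((z-1)/z)/((z+1)/z)" using that by (simp add: diff_divide_distrib add_divide_distrib)
    also have "\<dots> = (z-1)/(z+1)" using that by simp
    also have "\<dots> = ((1+z) - 2)/(1+z)" by (simp add: algebra_simps)
    also have "\<dots> = 1 - 2/(1+z)" using that by (subst diff_divide_distrib) simp
    finally show ?thesis .
  qed
  show ?thesis unfolding tanh_real_altdef e using g[OF p] by simp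
qed

lemma exp_quad: assumes "\<bar>x::real\<bar> \<le> 1" shows "\<bar>exp x - 1 - x\<bar> \<le> x^2"
proof (cases "x \<ge> 0")
  case True
  have "x^2 \<ge> 0" by simp
  then show ?thesis using exp_bound[of x] assms exp_ge_add_one_self[of x] True unfolding abs_le_iff by linarith
next
  case False
  define y where "y = -x"
  have y: "0 < y" "y \<le> 1" using False assms y_def by auto
  have "exp y \<ge> 1 + y" by (rule exp_ge_add_one_self)
  hence "exp x \<le> 1 / (1 + y)" using y by (simp add: y_def exp_minus field_simps)
  also have "1/(1+y) \<le> 1 - y + y^2" using y by (simp add: field_simps power2_eq_square)
  finally have "exp x \<le> 1 + x + x^2" by (simp add: y_def)
  moreover have "x^2 \<ge> 0" by simp
  ultimately show ?thesis using exp_ge_add_one_self[of x] unfolding abs_le_iff by linarith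
qed

lemma core:
  fixes E \<delta> c s M :: real
  assumes E: "0 < E" "E \<le> 1/2" and d: "0 < \<delta>" "\<delta> \<le> 1/2" and c: "\<bar>c\<bar> \<le> 1"
    and s: "0 \<le> s" and M: "exp (2*M) = 1/E"
  shows "\<bar>(tanh (M + s) - tanh (M + s - \<delta> * c / 2)) / (2*E*\<delta>) - exp (-2*s) * c\<bar> \<le> \<delta> + 8*E"
proof -
  define u where "u = exp (-2*s)"
  define w where "w = exp (\<delta>*c)"
  have u: "0 < u" "u \<le> 1" using s by (auto simp: u_def)
  have w: "0 < w" by (simp add: w_def)
  have dc: "\<bar>\<delta>*c\<bar> \<le> 1/2" using d c by (simp add: abs_mult) (smt (verit) mult_left_le)
  have w2: "w \<le> 2" unfolding w_def
    using exp_half_le2 dc by (smt (verit) exp_le_cancel_iff)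
  have M2: "exp (M*2) = 1/E" using M by (simp add: mult.commute)
  have Y: "exp (2*(M+s)) = 1/(E*u)"
    using M E by (simp add: u_def distrib_left exp_add exp_minus field_simps M2)
  have X: "exp (2*(M+s - \<delta>*c/2)) = 1/(E*u*w)"
  proof -
    have "2*(M+s - \<delta>*c/2) = 2*M + 2*s - \<delta>*c" by (simp add: algebra_simps)
    hence "exp (2*(M+s - \<delta>*c/2)) = exp (2*M) * exp (2*s) / exp (\<delta>*c)"
      by (simp add: exp_add exp_diff)
    also have "\<dots> = 1/(E*u*w)" using E by (simp add: M M2 u_def w_def exp_minus field_simps)
    finally show ?thesis .
  qed
  have Eu: "0 < E*u" "0 < E*u*w" using E u w by auto
  define D where "D = (1 + E*u*w) * (1 + E*u)"
  have eq: "(tanh (M + s) - tanh (M + s - \<delta> * c / 2)) / (2*E*\<delta>) = u * ((w - 1)/\<delta>) / D"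
  proof -
    define a where "a = E*u"
    define b where "b = E*u*w"
    have ab: "a > 0" "b > 0" using Eu a_def b_def by auto
    have f: "2/(1+1/x) = 2*x/(x+1)" if "x > 0" for x::real using that by (simp add: field_simps)
    have g: "2*b/(b+1) - 2*a/(a+1) = 2*(b-a)/((b+1)*(a+1))" using ab by (simp add: field_simps)
    have P: "(b+1)*(a+1) = D" by (simp add: D_def a_def b_def algebra_simps)
    have ba: "b - a = E*(u*(w-1))" by (simp add: a_def b_def algebra_simps)
    have Dp: "D > 0" unfolding D_def using Eu by simp
    have h: "(2*(b-a)/((b+1)*(a+1))) / (2*E*\<delta>) = u * ((w - 1)/\<delta>) / D"
      unfolding P ba using E d Dp by (simp add: field_simps)
    show ?thesis unfolding tanh_alt Y X using f[OF ab(1)] f[OF ab(2)] g h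
      by (simp add: a_def b_def)
  qed
  have q: "\<bar>(w-1)/\<delta> - c\<bar> \<le> \<delta>"
  proof -
    have "\<bar>w - 1 - \<delta>*c\<bar> \<le> (\<delta>*c)^2" unfolding w_def using exp_quad dc by auto
    also have "\<dots> \<le> \<delta>^2" using c d by (simp add: power_mult_distrib abs_square_le_1 mult_le_cancel_left1)
    finally have "\<bar>w - 1 - \<delta>*c\<bar> \<le> \<delta> * \<delta>" by (simp add: power2_eq_square)
    moreover have "(w-1)/\<delta> - c = (w - 1 - \<delta>*c)/\<delta>" using d by (simp add: field_simps)
    moreover have "\<bar>(w - 1 - \<delta>*c)/\<delta>\<bar> = \<bar>w - 1 - \<delta>*c\<bar>/\<delta>" using d by simp
    ultimately show ?thesis using d by (simp only: pos_divide_le_eq)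
  qed
  have q2: "\<bar>(w-1)/\<delta>\<bar> \<le> 2" using q c d by linarith
  have Eu1: "E*u \<le> E" using E u by (simp add: mult_le_cancel_left1)
  have Euw: "E*u*w \<le> 2*E"
  proof -
    have "E*u*w \<le> E*w" using Eu1 w by (simp add: mult_right_mono)
    also have "\<dots> \<le> E*2" using E w2 by (simp add: mult_left_mono)
    finally show ?thesis by simp
  qed
  have D1: "1 \<le> D" unfolding D_def using Eu mult_mono[of 1 "1+E*u*w" 1 "1+E*u"]
    by simp
  have D2: "D \<le> 1 + 4*E"
  proof -
    have "D \<le> (1+2*E)*(1+E)" unfolding D_def using Eu Euw Eu1 by (intro mult_mono) auto
    also have "\<dots> = 1 + 3*E + 2*E*E" by (simp add: algebra_simps)
    also have "\<dots> \<le> 1 + 4*E" using E by (simp add: mult_right_le_one_le)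
    finally show ?thesis .
  qed
  have r: "\<bar>1/D - 1\<bar> \<le> 4*E"
  proof -
    have "\<bar>1/D - 1\<bar> = 1 - 1/D" using D1 by (simp add: abs_if)
    also have "\<dots> = (D-1)/D" using D1 by (simp add: field_simps)
    also have "\<dots> \<le> D - 1"
    proof -
      have "(D-1)*1 \<le> (D-1)*D" using D1 by (intro mult_left_mono) auto
      thus ?thesis using D1 by (simp add: pos_divide_le_eq)
    qed
    finally show ?thesis using D2 by linarith
  qed
  define Q where "Q = (w-1)/\<delta>"
  have "\<bar>u * Q / D - u*c\<bar> = u * \<bar>Q * (1/D - 1) + (Q - c)\<bar>"
  proof -
    have "u * Q / D - u*c = u * (Q * (1/D - 1) + (Q - c))" by (simp add: algebra_simps)
    thus ?thesis using u by (simp add: abs_mult)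
  qed
  also have "\<dots> \<le> \<bar>Q * (1/D - 1) + (Q - c)\<bar>" using u
    by (simp add: mult_left_le_one_le)
  also have "\<dots> \<le> \<bar>Q\<bar> * \<bar>1/D - 1\<bar> + \<bar>Q - c\<bar>" by (metis abs_mult abs_triangle_ineq)
  also have "\<dots> \<le> 2 * (4*E) + \<delta>" using q q2 r unfolding Q_def
    by (intro add_mono mult_mono) auto
  finally have "\<bar>u * Q / D - u*c\<bar> \<le> 8*E + \<delta>" by simp
  then show ?thesis using eq unfolding Q_def u_def by simp
qed

lemma sum_delta_mult: "(\<Sum>j<(n::nat). (if j = p then x else 0) * (v j::real)) = (if p < n then x * v p else 0)"
proof -
  have "(\<Sum>j<n. (if j = p then x else 0) * v j) = (\<Sum>j<n. if j = p then x * v p else 0)"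
    by (rule sum.cong) auto
  also have "\<dots> = (if p < n then x * v p else 0)" by (subst sum.delta) auto
  finally show ?thesis .
qed

definition mat1 :: "nat \<Rightarrow> (nat \<Rightarrow> real) \<Rightarrow> real \<Rightarrow> nat \<Rightarrow> nat \<Rightarrow> real" where
  "mat1 K a \<delta> i j = (if i < K then (if j = 0 then a (i+1) / 2 else 0) + (if j = i+1 then - \<delta>/2 else 0)
      else (if j = 0 then a (i-K+1) / 2 else 0))"

definition mat2 :: "nat \<Rightarrow> real \<Rightarrow> nat \<Rightarrow> nat \<Rightarrow> real" where
  "mat2 K g i j = (if j = i + K then g else 0) + (if j = i then - g else 0)"

definition net1 where "net1 K a \<delta> M = Layer (K+1) (2*K) (mat1 K a \<delta>) (Some (\<lambda>_. M)) True"
definition net2 where "net2 K g = Layer (2*K) K (mat2 K g) None False"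

lemma eval1_A: assumes "i < K"
  shows "eval_layer (net1 K a \<delta> M) v i = tanh (a (i+1)/2 * v 0 - \<delta>/2 * v (i+1) + M)"
proof -
  have "(\<Sum>j<K+1. mat1 K a \<delta> i j * v j) = (\<Sum>j<K+1. (if j = 0 then a (i+1) / 2 else 0) * v j)
     + (\<Sum>j<K+1. (if j = i+1 then - \<delta>/2 else 0) * v j)"
    unfolding mat1_def using assms by (simp add: distrib_right sum.distrib)
  also have "\<dots> = a (i+1)/2 * v 0 - \<delta>/2 * v (i+1)" unfolding sum_delta_mult using assms by simp
  finally show ?thesis unfolding eval_layer_def net1_def using assms by simp
qed

lemma eval1_B: assumes "i < K"
  shows "eval_layer (net1 K a \<delta> M) v (i + K) = tanh (a (i+1)/2 * v 0 + M)"
proof -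
  have "(\<Sum>j<K+1. mat1 K a \<delta> (i+K) j * v j) = (\<Sum>j<K+1. (if j = 0 then a (i+1) / 2 else 0) * v j)"
    unfolding mat1_def using assms by (intro sum.cong) auto
  also have "\<dots> = a (i+1)/2 * v 0" unfolding sum_delta_mult using assms by simp
  finally show ?thesis unfolding eval_layer_def net1_def using assms by simp
qed

lemma eval2: assumes "i < K"
  shows "eval_layer (net2 K g) h i = g * (h (i+K) - h i)"
proof -
  have "(\<Sum>j<2*K. mat2 K g i j * h j) = (\<Sum>j<2*K. (if j = i + K then g else 0) * h j)
     + (\<Sum>j<2*K. (if j = i then - g else 0) * h j)"
    unfolding mat2_def by (simp add: distrib_right sum.distrib)
  also have "\<dots> = g * (h (i+K) - h i)" unfolding sum_delta_mult using assms by (simp add: algebra_simps)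
  finally show ?thesis unfolding eval_layer_def net2_def using assms by simp
qed

lemma weights: "num_weights [net1 K a \<delta> M, net2 K g] = 4*K*K + 4*K"
  by (simp add: num_weights_def layer_weights_def net1_def net2_def algebra_simps)

lemma dims: "mlp_dims_ok [net1 K a \<delta> M, net2 K g] (K+1) K"
  by (simp add: net1_def net2_def)


theorem theorem2:
  fixes \<alpha> :: real
  assumes "\<alpha> > 0"
  shows "\<exists>C::real. \<forall>\<epsilon>::real. \<forall>K::nat. 0 < \<epsilon> \<longrightarrow> \<epsilon> < 1 \<longrightarrow> K \<ge> 1 \<longrightarrow>
    (\<exists>net. mlp_dims_ok net (K + 1) K
       \<and> real (num_weights net) \<le> C * (real K ^ 3 + real K * (ln (1 / \<epsilon>))^2)
       \<and> (\<forall>t c. 0 \<le> t \<and> t \<le> 1 \<and> (\<forall>k\<in>{1..K}. \<bar>c k\<bar> \<le> 1) \<longrightarrow>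
            (\<forall>i<K. \<bar>eval_mlp net (mlp_input K t c) i - heat_step \<alpha> t c (i + 1)\<bar> \<le> \<epsilon>)))"
proof (intro exI[of _ 8] allI impI)
  fix \<epsilon> :: real and K :: nat
  assume e: "0 < \<epsilon>" "\<epsilon> < 1" and K: "K \<ge> 1"
  define a where "a = (\<lambda>k::nat. 4 * pi^2 * (real k)^2 * \<alpha>)"
  define \<delta> where "\<delta> = \<epsilon>/2"
  define E where "E = \<epsilon>/16"
  define M where "M = ln (1/E) / 2"
  define g where "g = 1/(2*E*\<delta>)"
  define net where "net = [net1 K a \<delta> M, net2 K g]"
  have E: "0 < E" "E \<le> 1/2" using e by (auto simp: E_def)
  have d: "0 < \<delta>" "\<delta> \<le> 1/2" using e by (auto simp: \<delta>_def)
  have Mx: "exp (2*M) = 1/E" using E by (simp add: M_def)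
  have a0: "a k \<ge> 0" for k using assms by (simp add: a_def)
  show "\<exists>net. mlp_dims_ok net (K + 1) K
       \<and> real (num_weights net) \<le> 8 * (real K ^ 3 + real K * (ln (1 / \<epsilon>))^2)
       \<and> (\<forall>t c. 0 \<le> t \<and> t \<le> 1 \<and> (\<forall>k\<in>{1..K}. \<bar>c k\<bar> \<le> 1) \<longrightarrow>
            (\<forall>i<K. \<bar>eval_mlp net (mlp_input K t c) i - heat_step \<alpha> t c (i + 1)\<bar> \<le> \<epsilon>))"
  proof (intro exI[of _ net] conjI allI impI)
    show "mlp_dims_ok net (K + 1) K" unfolding net_def by (rule dims)
    have "real (num_weights net) = 4 * real K * real K + 4 * real K"
      unfolding net_def weights by simp
    also have "\<dots> \<le> 8 * real K ^ 3"
    proof -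
      have "real K \<le> real K * real K" using K by (simp add: mult_le_cancel_left1)
      moreover have "real K * real K \<le> real K * real K * real K" using K by (simp add: mult_le_cancel_left1)
      ultimately show ?thesis by (simp add: power3_eq_cube)
    qed
    also have "\<dots> \<le> 8 * (real K ^ 3 + real K * (ln (1 / \<epsilon>))^2)" by simp
    finally show "real (num_weights net) \<le> 8 * (real K ^ 3 + real K * (ln (1 / \<epsilon>))^2)" .
  next
    fix t :: real and c :: "nat \<Rightarrow> real" and i :: nat
    assume tc: "0 \<le> t \<and> t \<le> 1 \<and> (\<forall>k\<in>{1..K}. \<bar>c k\<bar> \<le> 1)" and i: "i < K"
    define v where "v = mlp_input K t c"
    have v0: "v 0 = t" and vi: "v (i+1) = c (i+1)" using i by (auto simp: v_def mlp_input_def)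
    have ci: "\<bar>c (i+1)\<bar> \<le> 1" using tc i by auto
    define s where "s = a (i+1) / 2 * t"
    have s: "0 \<le> s" using a0 tc by (simp add: s_def)
    have ev: "eval_mlp net v i = g * (tanh (M + s) - tanh (M + s - \<delta> * c (i+1) / 2))"
    proof -
      have "eval_mlp net v i = g * (eval_layer (net1 K a \<delta> M) v (i+K) - eval_layer (net1 K a \<delta> M) v i)"
        unfolding net_def using i by (simp add: eval2)
      also have "\<dots> = g * (tanh (a (i+1)/2 * v 0 + M) - tanh (a (i+1)/2 * v 0 - \<delta>/2 * v (i+1) + M))"
        using i by (simp only: eval1_A eval1_B)
      also have "\<dots> = g * (tanh (M + s) - tanh (M + s - \<delta> * c (i+1) / 2))"
        unfolding v0 vi s_def by (simp add: algebra_simps)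
      finally show ?thesis .
    qed
    have hs: "heat_step \<alpha> t c (i + 1) = exp (-2*s) * c (i+1)"
      by (simp add: heat_step_def s_def a_def algebra_simps)
    have "\<bar>eval_mlp net v i - heat_step \<alpha> t c (i + 1)\<bar> \<le> \<delta> + 8*E"
    proof -
      have "g * (tanh (M + s) - tanh (M + s - \<delta> * c (i+1) / 2)) = (tanh (M + s) - tanh (M + s - \<delta> * c (i+1) / 2)) / (2*E*\<delta>)"
        by (simp add: g_def)
      thus ?thesis unfolding ev hs using core[OF E d ci s Mx] by simp
    qed
    also have "\<dots> = \<epsilon>" by (simp add: \<delta>_def E_def)
    finally show "\<bar>eval_mlp net (mlp_input K t c) i - heat_step \<alpha> t c (i + 1)\<bar> \<le> \<epsilon>"
      by (simp add: v_def)
  qed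
qed

end
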